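(* Let $q$ be a prime power, let $l\ge 1$ and $r_1,\ldots,r_l\ge 1$ be integers, let $\alpha_1,\ldots,\alpha_l$ be pairwise distinct elements of $\mathbb{F}_q^*$, and let $\gamma\in\mathbb{F}_q$. Consider the system in the $r_1+\cdots+r_l$ unknowns $x^{(i)}_j$ ($1\le i\le l$, $1\le j\le r_i$) over $\mathbb{F}_q$: $$\sum_{i=1}^l\sum_{j=1}^{r_i}x^{(i)}_j=\gamma,\qquad \sum_{i=1}^l\alpha_i\sum_{j=1}^{r_i}x^{(i)}_j=0,\qquad \prod_{i,j}x^{(i)}_j\neq 0.$$ For $l=1$ the number of solutions is $A_{r_1}=\psi_{r_1}$ if $\gamma=0$ and $0$ if $\gamma\ne 0$. For $l>1$ the number of solutions is $A_{r_1,\ldots,r_l}$ if $\gamma=0$ and $(\psi_{r_1+\cdots+r_l}-A_{r_1,\ldots,r_l})/(q-1)$ if $\gamma\neq 0$, where $A_{r_1,\ldots,r_l}$ is defined recursively by $$A_{r_1}=\psi_{r_1},\qquad A_{r_1,\ldots,r_l}=\psi_{r_1+\cdots+r_{l-1}}\varphi_{r_l}+(-1)^{r_l}A_{r_1,\ldots,r_{l-1}}.$$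
   Context: For an integer $m\ge 0$, $\psi_m$ denotes the number of $(x_1,\ldots,x_m)\in\mathbb{F}_q^m$ with $\sum_{i=1}^m x_i=0$ and all $x_i\ne 0$, and $\varphi_m$ denotes the number of $(x_1,\ldots,x_m)\in\mathbb{F}_q^m$ with $\sum_{i=1}^m x_i=1$ and all $x_i\neq 0$ (so $\psi_0=1$, $\varphi_0=0$). *)

theory Defs
  imports Complex_Main "HOL-Library.FuncSet"
begin

text \<open>The field F_q is the finite field type 'a, q = CARD('a).\<close>

definition psi :: "'a::{finite,field} itself \<Rightarrow> nat \<Rightarrow> nat" where
  "psi T m = card {x :: nat \<Rightarrow> 'a. x \<in> {..<m} \<rightarrow>\<^sub>E UNIV \<and>
                      (\<Sum>i<m. x i) = 0 \<and> (\<forall>i<m. x i \<noteq> 0)}"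

definition phi :: "'a::{finite,field} itself \<Rightarrow> nat \<Rightarrow> nat" where
  "phi T m = card {x :: nat \<Rightarrow> 'a. x \<in> {..<m} \<rightarrow>\<^sub>E UNIV \<and>
                      (\<Sum>i<m. x i) = 1 \<and> (\<forall>i<m. x i \<noteq> 0)}"

text \<open>A T r l = A_{r_1,...,r_l}, with r_i written r (i-1). Only meaningful for l >= 1.\<close>
fun A :: "'a::{finite,field} itself \<Rightarrow> (nat \<Rightarrow> nat) \<Rightarrow> nat \<Rightarrow> int" where
  "A T r 0 = 0"
| "A T r (Suc 0) = int (psi T (r 0))"
| "A T r (Suc (Suc l)) =
     int (psi T (\<Sum>i<Suc l. r i)) * int (phi T (r (Suc l))) + (-1) ^ r (Suc l) * A T r (Suc l)"

end

theory Submission imports Defs begin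


definition cnt :: "'b set \<Rightarrow> ('b \<Rightarrow> 'a::field) \<Rightarrow> 'a \<Rightarrow> nat" where
 "cnt J w t = card {x. x \<in> J \<rightarrow>\<^sub>E UNIV \<and> (\<forall>j\<in>J. x j \<noteq> 0) \<and> (\<Sum>j\<in>J. w j * x j) = t}"

lemma cnt_bij:
  fixes w :: "'b \<Rightarrow> 'a::field" and h :: "'c \<Rightarrow> 'b"
  assumes h: "bij_betw h J' J" and w: "\<forall>j\<in>J. w j \<noteq> 0"
  shows "cnt J w t = cnt J' (\<lambda>_. 1) t"
proof -
  let ?A = "{x. x \<in> J \<rightarrow>\<^sub>E UNIV \<and> (\<forall>j\<in>J. x j \<noteq> 0) \<and> (\<Sum>j\<in>J. w j * x j) = t}"
  let ?B = "{x. x \<in> J' \<rightarrow>\<^sub>E UNIV \<and> (\<forall>j\<in>J'. x j \<noteq> 0) \<and> (\<Sum>j\<in>J'. 1 * x j) = t}"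
  define f where "f x = restrict (\<lambda>j'. w (h j') * x (h j')) J'" for x :: "'b \<Rightarrow> 'a"
  define g where "g y = restrict (\<lambda>j. y (the_inv_into J' h j) / w j) J" for y :: "'c \<Rightarrow> 'a"
  have hJ: "h j' \<in> J" if "j' \<in> J'" for j' using h that bij_betwE by blast
  have inv1: "the_inv_into J' h (h j') = j'" if "j' \<in> J'" for j'
    using the_inv_into_f_f h that unfolding bij_betw_def by metis
  have inv2: "h (the_inv_into J' h j) = j" if "j \<in> J" for j
    using f_the_inv_into_f_bij_betw[OF h] that by blast
  have inv3: "the_inv_into J' h j \<in> J'" if "j \<in> J" for j
    using h that by (metis bij_betw_def the_inv_into_into order_refl)
  have sum: "(\<Sum>j'\<in>J'. 1 * f x j') = (\<Sum>j\<in>J. w j * x j)" for x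
  proof -
    have "(\<Sum>j'\<in>J'. 1 * f x j') = (\<Sum>j'\<in>J'. w (h j') * x (h j'))"
      unfolding f_def by (rule sum.cong) auto
    also have "\<dots> = (\<Sum>j\<in>J. w j * x j)"
      by (rule sum.reindex_bij_betw[OF h])
    finally show ?thesis .
  qed
  have fg: "\<forall>a\<in>?B. f (g a) = a"
  proof
      fix a assume a: "a \<in> ?B"
      show "f (g a) = a"
      proof
        fix j show "f (g a) j = a j"
        proof (cases "j \<in> J'")
          case True
          have "f (g a) j = w (h j) * (a (the_inv_into J' h (h j)) / w (h j))"
            using hJ[OF True] True by (simp add: g_def f_def)
          also have "\<dots> = a j" using inv1[OF True] w hJ[OF True] by simp
          finally show ?thesis .
        next
          case False
          have "a \<in> J' \<rightarrow>\<^sub>E UNIV" using a by blast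
          then have "a j = undefined" using False by (rule PiE_arb)
          moreover have "f (g a) j = undefined" unfolding f_def using False by simp
          ultimately show ?thesis by simp
        qed
      qed
  qed
  have "bij_betw f ?A ?B"
  proof (rule bij_betw_byWitness[where f'=g])
    show "\<forall>a\<in>?A. g (f a) = a"
    proof
      fix a assume a: "a \<in> ?A"
      show "g (f a) = a"
      proof
        fix j show "g (f a) j = a j"
        proof (cases "j \<in> J")
          case True
          have "g (f a) j = (w (h (the_inv_into J' h j)) * a (h (the_inv_into J' h j))) / w j"
            using inv3[OF True] True by (simp add: g_def f_def)
          also have "\<dots> = a j" using inv2[OF True] w True by simp
          finally show ?thesis .
        next
          case False
          have "a \<in> J \<rightarrow>\<^sub>E UNIV" using a by blast
          then have "a j = undefined" using False by (rule PiE_arb)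
          moreover have "g (f a) j = undefined" unfolding g_def using False by simp
          ultimately show ?thesis by simp
        qed
      qed
    qed
    show "\<forall>a\<in>?B. f (g a) = a" by (rule fg)
    show "f ` ?A \<subseteq> ?B"
    proof
      fix y assume "y \<in> f ` ?A"
      then obtain x where x: "x \<in> ?A" "y = f x" by blast
      show "y \<in> ?B" using x w hJ sum[of x] by (auto simp: f_def)
    qed
    show "g ` ?B \<subseteq> ?A"
    proof
      fix y assume "y \<in> g ` ?B"
      then obtain x where x: "x \<in> ?B" "y = g x" by blast
      have "(\<Sum>j\<in>J. w j * y j) = (\<Sum>j'\<in>J'. 1 * f y j')" using sum by simp
      also have "f y = x" unfolding x(2) using fg x(1) by blast
      finally have "(\<Sum>j\<in>J. w j * y j) = t" using x by simp
      then show "y \<in> ?A" using x w inv3 by (auto simp: g_def)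
    qed
  qed
  then show ?thesis unfolding cnt_def by (rule bij_betw_same_card)
qed

lemma card_split:
  fixes P :: "('b \<Rightarrow> 'a::finite) \<Rightarrow> ('b \<Rightarrow> 'a) \<Rightarrow> bool"
  assumes fin: "finite J" "finite K" and disj: "J \<inter> K = {}"
  shows "card {x. x \<in> (J \<union> K) \<rightarrow>\<^sub>E UNIV \<and> P (restrict x J) (restrict x K)}
       = (\<Sum>y\<in>J \<rightarrow>\<^sub>E UNIV. card {z. z \<in> K \<rightarrow>\<^sub>E UNIV \<and> P y z})"
proof -
  let ?L = "{x. x \<in> (J \<union> K) \<rightarrow>\<^sub>E UNIV \<and> P (restrict x J) (restrict x K)}"
  let ?R = "SIGMA y:(J \<rightarrow>\<^sub>E UNIV). {z. z \<in> K \<rightarrow>\<^sub>E UNIV \<and> P y z}"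
  define g where "g = (\<lambda>(y::'b\<Rightarrow>'a,z::'b\<Rightarrow>'a) p. if p \<in> J then y p else z p)"
  have r1: "restrict (g (y,z)) J = y" if "y \<in> J \<rightarrow>\<^sub>E UNIV" for y z
  proof (rule ext)
    fix p show "restrict (g (y,z)) J p = y p"
      using PiE_arb[OF that, of p] by (cases "p \<in> J") (simp_all add: g_def)
  qed
  have r2: "restrict (g (y,z)) K = z" if "z \<in> K \<rightarrow>\<^sub>E UNIV" for y z
  proof (rule ext)
    fix p show "restrict (g (y,z)) K p = z p"
      using PiE_arb[OF that, of p] disj by (cases "p \<in> K") (auto simp add: g_def)
  qed
  have g1: "g (restrict x J, restrict x K) = x" if "x \<in> (J \<union> K) \<rightarrow>\<^sub>E UNIV" for x
  proof (rule ext)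
    fix p show "g (restrict x J, restrict x K) p = x p"
      using PiE_arb[OF that, of p] by (cases "p \<in> J"; cases "p \<in> K") (simp_all add: g_def)
  qed
  have g2: "g (y,z) \<in> (J \<union> K) \<rightarrow>\<^sub>E UNIV" if "y \<in> J \<rightarrow>\<^sub>E UNIV" "z \<in> K \<rightarrow>\<^sub>E UNIV" for y z
  proof -
    have "\<forall>p. p \<notin> J \<union> K \<longrightarrow> g (y,z) p = undefined" using PiE_arb[OF that(2)] by (auto simp: g_def)
    then show ?thesis by (simp add: PiE_iff extensional_def)
  qed
  have "bij_betw (\<lambda>x. (restrict x J, restrict x K)) ?L ?R"
  proof (rule bij_betw_byWitness[where f'=g])
    show "\<forall>a\<in>?L. g (restrict a J, restrict a K) = a" using g1 by blast
    show "\<forall>a\<in>?R. (restrict (g a) J, restrict (g a) K) = a" using r1 r2 by auto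
    show "(\<lambda>x. (restrict x J, restrict x K)) ` ?L \<subseteq> ?R" by auto
    show "g ` ?R \<subseteq> ?L"
    proof
      fix x assume "x \<in> g ` ?R"
      then obtain y z where yz: "(y,z) \<in> ?R" "x = g (y,z)" by auto
      then show "x \<in> ?L" using g2 r1 r2 by auto
    qed
  qed
  then have "card ?L = card ?R" by (rule bij_betw_same_card)
  also have "\<dots> = (\<Sum>y\<in>J \<rightarrow>\<^sub>E UNIV. card {z. z \<in> K \<rightarrow>\<^sub>E UNIV \<and> P y z})"
  proof (rule card_SigmaI)
    show "finite (J \<rightarrow>\<^sub>E (UNIV::'a set))" using fin by (simp add: finite_PiE)
    show "\<forall>a\<in>J \<rightarrow>\<^sub>E UNIV. finite {z. z \<in> K \<rightarrow>\<^sub>E (UNIV::'a set) \<and> P a z}"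
      using fin by (auto intro: finite_subset[OF _ finite_PiE[of K "\<lambda>_. UNIV"]])
  qed
  finally show ?thesis .
qed

lemma cnt_card:
  fixes w :: "'b \<Rightarrow> 'a::field"
  assumes "finite J" "\<forall>j\<in>J. w j \<noteq> 0"
  shows "cnt J w t = cnt {..<card J} (\<lambda>_. 1) t"
proof -
  obtain h where "bij_betw h {..<card J} J" using finite_same_card_bij[of "{..<card J}" J] assms by auto
  then show ?thesis using cnt_bij assms by blast
qed

lemma psi_cnt: "psi TYPE('a::{finite,field}) m = cnt {..<m} (\<lambda>_. 1::'a) 0"
  unfolding psi_def cnt_def by (intro arg_cong[where f=card]) auto

lemma phi_cnt: "phi TYPE('a::{finite,field}) m = cnt {..<m} (\<lambda>_. 1::'a) 1"
  unfolding phi_def cnt_def by (intro arg_cong[where f=card]) auto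

lemma cnt_nonzero:
  fixes t :: "'a::{finite,field}"
  assumes "t \<noteq> 0"
  shows "cnt {..<m} (\<lambda>_. 1::'a) t = phi TYPE('a) m"
proof -
  have "cnt {..<m} (\<lambda>_. 1::'a) t = cnt {..<m} (\<lambda>_. 1/t) 1"
    unfolding cnt_def
  proof (intro arg_cong[where f=card] Collect_cong conj_cong refl)
    fix x :: "nat \<Rightarrow> 'a"
    have "(\<Sum>j<m. 1 / t * x j) = 1/t * (\<Sum>j<m. x j)" by (simp add: sum_distrib_left)
    then show "((\<Sum>j<m. 1 * x j) = t) = ((\<Sum>j<m. 1 / t * x j) = 1)"
      using assms by (auto simp: field_simps)
  qed
  also have "\<dots> = cnt {..<m} (\<lambda>_. 1::'a) 1" using cnt_card[of "{..<m}" "\<lambda>_. 1/t" 1] assms by simp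
  finally show ?thesis by (simp add: phi_cnt)
qed

lemma cnt_Suc:
  fixes t :: "'a::{finite,field}"
  shows "int (cnt {..<Suc m} (\<lambda>_. 1::'a) t) = (int (card (UNIV::'a set)) - 1) ^ m - int (cnt {..<m} (\<lambda>_. 1::'a) t)"
proof -
  let ?P = "\<lambda>(y::nat\<Rightarrow>'a) (z::nat\<Rightarrow>'a). (\<forall>j<m. y j \<noteq> 0) \<and> z m \<noteq> 0 \<and> (\<Sum>j<m. y j) + z m = t"
  have eq: "{..<Suc m} = {..<m} \<union> {m}" by auto
  have "cnt {..<Suc m} (\<lambda>_. 1::'a) t = card {x. x \<in> ({..<m} \<union> {m}) \<rightarrow>\<^sub>E UNIV \<and> ?P (restrict x {..<m}) (restrict x {m})}"
    unfolding cnt_def eq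
  proof (intro arg_cong[where f=card] Collect_cong)
    fix x :: "nat \<Rightarrow> 'a"
    have "(\<Sum>j<m. restrict x {..<m} j) = (\<Sum>j<m. x j)" by simp
    then show "(x \<in> ({..<m} \<union> {m}) \<rightarrow>\<^sub>E UNIV \<and> (\<forall>j\<in>{..<m} \<union> {m}. x j \<noteq> 0) \<and> (\<Sum>j\<in>{..<m} \<union> {m}. 1 * x j) = t)
       = (x \<in> ({..<m} \<union> {m}) \<rightarrow>\<^sub>E UNIV \<and> ?P (restrict x {..<m}) (restrict x {m}))"
      by (auto simp: add.commute)
  qed
  also have "\<dots> = (\<Sum>y\<in>{..<m} \<rightarrow>\<^sub>E UNIV. card {z. z \<in> {m} \<rightarrow>\<^sub>E UNIV \<and> ?P y z})"
    by (rule card_split) auto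
  also have "\<dots> = (\<Sum>y\<in>{..<m} \<rightarrow>\<^sub>E UNIV. if (\<forall>j<m. y j \<noteq> 0) \<and> (\<Sum>j<m. y j) \<noteq> t then 1 else 0)"
  proof (rule sum.cong[OF refl])
    fix y :: "nat \<Rightarrow> 'a"
    show "card {z. z \<in> {m} \<rightarrow>\<^sub>E UNIV \<and> ?P y z} = (if (\<forall>j<m. y j \<noteq> 0) \<and> (\<Sum>j<m. y j) \<noteq> t then 1 else 0)"
    proof (cases "(\<forall>j<m. y j \<noteq> 0) \<and> (\<Sum>j<m. y j) \<noteq> t")
      case True
      have "{z. z \<in> {m} \<rightarrow>\<^sub>E UNIV \<and> ?P y z} = {(\<lambda>p. if p = m then t - (\<Sum>j<m. y j) else undefined)}"
        using True by (auto simp: PiE_def extensional_def fun_eq_iff)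
      then show ?thesis using True by simp
    next
      case False
      have E: "{z. z \<in> {m} \<rightarrow>\<^sub>E UNIV \<and> ?P y z} = {}"
      proof -
        { fix z assume z: "?P y z"
          then have s: "(\<Sum>j<m. y j) = t" using False by blast
          from z have "z m \<noteq> 0" "(\<Sum>j<m. y j) + z m = t" by blast+
          with s have False by simp }
        then show ?thesis by blast
      qed
      show ?thesis using False unfolding E by simp
    qed
  qed
  also have "\<dots> = card {y. y \<in> {..<m} \<rightarrow>\<^sub>E UNIV \<and> (\<forall>j<m. y j \<noteq> 0) \<and> (\<Sum>j<m. y j) \<noteq> t}"
  proof -
    have "(\<Sum>y\<in>{..<m} \<rightarrow>\<^sub>E UNIV. if (\<forall>j<m. y j \<noteq> 0) \<and> (\<Sum>j<m. y j) \<noteq> t then 1 else 0)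
       = (\<Sum>y\<in>{y \<in> {..<m} \<rightarrow>\<^sub>E (UNIV::'a set). (\<forall>j<m. y j \<noteq> 0) \<and> (\<Sum>j<m. y j) \<noteq> t}. 1)"
      by (rule sum.inter_filter[symmetric]) (simp add: finite_PiE)
    also have "\<dots> = card {y \<in> {..<m} \<rightarrow>\<^sub>E (UNIV::'a set). (\<forall>j<m. y j \<noteq> 0) \<and> (\<Sum>j<m. y j) \<noteq> t}"
      by simp
    finally show ?thesis .
  qed
  finally have 1: "cnt {..<Suc m} (\<lambda>_. 1::'a) t = card {y. y \<in> {..<m} \<rightarrow>\<^sub>E UNIV \<and> (\<forall>j<m. y j \<noteq> 0) \<and> (\<Sum>j<m. y j) \<noteq> t}" .
  let ?N = "{y. y \<in> {..<m} \<rightarrow>\<^sub>E (UNIV::'a set) \<and> (\<forall>j<m. y j \<noteq> 0)}"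
  have N: "?N = {..<m} \<rightarrow>\<^sub>E (UNIV - {0})" by (rule set_eqI) (simp add: PiE_iff, blast)
  have cN: "card ?N = (card (UNIV::'a set) - 1) ^ m" unfolding N by (simp add: card_PiE card_Diff_singleton)
  have fN: "finite ?N" unfolding N by (simp add: finite_PiE)
  have c2: "cnt {..<m} (\<lambda>_. 1::'a) t = card {y \<in> ?N. (\<Sum>j<m. y j) = t}"
    unfolding cnt_def by (intro arg_cong[where f=card]) auto
  have "card ?N = card {y \<in> ?N. (\<Sum>j<m. y j) = t} + card {y \<in> ?N. (\<Sum>j<m. y j) \<noteq> t}"
  proof -
    have eq: "?N = {y \<in> ?N. (\<Sum>j<m. y j) = t} \<union> {y \<in> ?N. (\<Sum>j<m. y j) \<noteq> t}"
      by (rule set_eqI) (simp, blast)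
    have "card ({y \<in> ?N. (\<Sum>j<m. y j) = t} \<union> {y \<in> ?N. (\<Sum>j<m. y j) \<noteq> t}) = card {y \<in> ?N. (\<Sum>j<m. y j) = t} + card {y \<in> ?N. (\<Sum>j<m. y j) \<noteq> t}"
    proof (rule card_Un_disjoint)
      show "finite {y \<in> ?N. (\<Sum>j<m. y j) = t}" by (rule finite_subset[OF _ fN]) blast
      show "finite {y \<in> ?N. (\<Sum>j<m. y j) \<noteq> t}" by (rule finite_subset[OF _ fN]) blast
    qed (simp add: disjoint_iff)
    then show ?thesis by (simp only: eq[symmetric])
  qed
  moreover have "{y \<in> ?N. (\<Sum>j<m. y j) \<noteq> t} = {y. y \<in> {..<m} \<rightarrow>\<^sub>E UNIV \<and> (\<forall>j<m. y j \<noteq> 0) \<and> (\<Sum>j<m. y j) \<noteq> t}" by (rule Collect_cong) simp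
  ultimately have "card ?N = cnt {..<m} (\<lambda>_. 1::'a) t + cnt {..<Suc m} (\<lambda>_. 1::'a) t"
    using 1 c2 by simp
  then have "int (cnt {..<Suc m} (\<lambda>_. 1::'a) t) = int (card ?N) - int (cnt {..<m} (\<lambda>_. 1::'a) t)"
    by simp
  also have "int (card ?N) = (int (card (UNIV::'a set)) - 1) ^ m"
  proof -
    have "card (UNIV::'a set) \<ge> 1" using card_gt_0_iff[of "UNIV::'a set"] by simp
    then show ?thesis unfolding cN by (simp add: of_nat_diff)
  qed
  finally show ?thesis .
qed

lemma psi_phi: "int (psi TYPE('a::{finite,field}) m) - int (phi TYPE('a) m) = (-1) ^ m"
proof (induction m)
  case 0
  have "psi TYPE('a) 0 = 1" unfolding psi_def
  proof -
    have "{x :: nat \<Rightarrow> 'a. x \<in> {..<0} \<rightarrow>\<^sub>E UNIV \<and> (\<Sum>i<0. x i) = 0 \<and> (\<forall>i<0. x i \<noteq> 0)} = {\<lambda>_. undefined}"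
      by auto
    then show "card {x :: nat \<Rightarrow> 'a. x \<in> {..<0} \<rightarrow>\<^sub>E UNIV \<and> (\<Sum>i<0. x i) = 0 \<and> (\<forall>i<0. x i \<noteq> 0)} = 1" by simp
  qed
  moreover have "phi TYPE('a) 0 = 0" unfolding phi_def by simp
  ultimately show ?case by simp
next
  case (Suc m)
  then show ?case unfolding psi_cnt phi_cnt cnt_Suc by (simp add: algebra_simps)
qed

definition Iset :: "(nat \<Rightarrow> nat) \<Rightarrow> nat \<Rightarrow> (nat \<times> nat) set" where
  "Iset r l = (SIGMA i:{..<l}. {..<r i})"

definition Tset :: "(nat \<Rightarrow> nat) \<Rightarrow> (nat \<Rightarrow> 'a::field) \<Rightarrow> nat \<Rightarrow> 'a \<Rightarrow> (nat \<times> nat \<Rightarrow> 'a) set" where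
  "Tset r \<alpha> l \<gamma> = {x. x \<in> Iset r l \<rightarrow>\<^sub>E UNIV \<and> (\<forall>p\<in>Iset r l. x p \<noteq> 0) \<and>
      (\<Sum>p\<in>Iset r l. x p) = \<gamma> \<and> (\<Sum>p\<in>Iset r l. \<alpha> (fst p) * x p) = 0}"

lemma Iset_finite[simp]: "finite (Iset r l)" by (simp add: Iset_def)

lemma Iset_card: "card (Iset r l) = (\<Sum>i<l. r i)" by (simp add: Iset_def)

lemma Iset_Suc: "Iset r (Suc l) = Iset r l \<union> ({l} \<times> {..<r l})"
  by (auto simp: Iset_def less_Suc_eq)

lemma Iset_disj: "Iset r l \<inter> ({l} \<times> {..<r l}) = {}"
  by (auto simp: Iset_def)

lemma cnt_N:
  fixes t :: "'a::{finite,field}"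
  assumes "finite K" "card K = m"
  shows "cnt K (\<lambda>_. 1::'a) t = (if t = 0 then psi TYPE('a) m else phi TYPE('a) m)"
  using cnt_card[of K "\<lambda>_. 1::'a" t] assms cnt_nonzero[of t m] by (simp add: psi_cnt)

lemma Tset_rec:
  fixes \<alpha> :: "nat \<Rightarrow> 'a::{finite,field}"
  assumes inj: "inj_on \<alpha> {..<Suc l}"
  shows "int (card (Tset r \<alpha> (Suc l) 0)) = int (psi TYPE('a) (\<Sum>i<l. r i)) * int (phi TYPE('a) (r l))
           + (-1) ^ r l * int (card (Tset r \<alpha> l 0))"
proof -
  define J where "J = Iset r l"
  define K where "K = {l} \<times> {..<r l}"
  have fJ: "finite J" and fK: "finite K" and disj: "J \<inter> K = {}" and JK: "Iset r (Suc l) = J \<union> K"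
    using Iset_disj Iset_Suc by (auto simp: J_def K_def)
  have cK: "card K = r l" by (simp add: K_def card_cartesian_product)
  define u where "u y = (\<Sum>p\<in>J. y p)" for y :: "nat \<times> nat \<Rightarrow> 'a"
  define v where "v y = (\<Sum>p\<in>J. \<alpha> (fst p) * y p)" for y :: "nat \<times> nat \<Rightarrow> 'a"
  define P where "P y z = ((\<forall>p\<in>J. y p \<noteq> 0) \<and> (\<forall>p\<in>K. z p \<noteq> 0) \<and> u y + (\<Sum>p\<in>K. z p) = 0
      \<and> v y + \<alpha> l * (\<Sum>p\<in>K. z p) = 0)" for y z :: "nat \<times> nat \<Rightarrow> 'a"
  define N where "N t = (if t = 0 then psi TYPE('a) (r l) else phi TYPE('a) (r l))" for t :: 'a
  define Y1 where "Y1 = {y \<in> J \<rightarrow>\<^sub>E UNIV. (\<forall>p\<in>J. y p \<noteq> 0) \<and> v y = \<alpha> l * u y}"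
  have fY1: "finite Y1" unfolding Y1_def using fJ by (auto intro: finite_subset[OF _ finite_PiE[of J "\<lambda>_. UNIV"]])
  have "Tset r \<alpha> (Suc l) 0 = {x. x \<in> (J \<union> K) \<rightarrow>\<^sub>E UNIV \<and> P (restrict x J) (restrict x K)}"
  proof (unfold Tset_def JK, intro Collect_cong conj_cong refl)
    fix x :: "nat \<times> nat \<Rightarrow> 'a"
    have uR: "u (restrict x J) = (\<Sum>p\<in>J. x p)" unfolding u_def by (rule sum.cong) auto
    have vR: "v (restrict x J) = (\<Sum>p\<in>J. \<alpha> (fst p) * x p)" unfolding v_def by (rule sum.cong) auto
    have kR: "(\<Sum>p\<in>K. restrict x K p) = (\<Sum>p\<in>K. x p)" by (rule sum.cong) auto
    have s1: "(\<Sum>p\<in>J \<union> K. x p) = u (restrict x J) + (\<Sum>p\<in>K. restrict x K p)"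
      unfolding uR kR by (rule sum.union_disjoint[OF fJ fK disj])
    have "(\<Sum>p\<in>J \<union> K. \<alpha> (fst p) * x p) = (\<Sum>p\<in>J. \<alpha> (fst p) * x p) + (\<Sum>p\<in>K. \<alpha> (fst p) * x p)"
      by (rule sum.union_disjoint[OF fJ fK disj])
    also have "(\<Sum>p\<in>K. \<alpha> (fst p) * x p) = (\<Sum>p\<in>K. \<alpha> l * x p)"
      by (rule sum.cong) (auto simp: K_def)
    also have "\<dots> = \<alpha> l * (\<Sum>p\<in>K. restrict x K p)"
      unfolding kR by (simp add: sum_distrib_left)
    finally have s2: "(\<Sum>p\<in>J \<union> K. \<alpha> (fst p) * x p) = v (restrict x J) + \<alpha> l * (\<Sum>p\<in>K. restrict x K p)"
      unfolding vR .
    show "((\<forall>p\<in>J \<union> K. x p \<noteq> 0) \<and> (\<Sum>p\<in>J \<union> K. x p) = 0 \<and> (\<Sum>p\<in>J \<union> K. \<alpha> (fst p) * x p) = 0)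
        = P (restrict x J) (restrict x K)"
      unfolding P_def s1 s2 by auto
  qed
  then have "card (Tset r \<alpha> (Suc l) 0) = (\<Sum>y\<in>J \<rightarrow>\<^sub>E UNIV. card {z. z \<in> K \<rightarrow>\<^sub>E UNIV \<and> P y z})"
    using card_split[OF fJ fK disj, of P] by simp
  also have "\<dots> = (\<Sum>y\<in>J \<rightarrow>\<^sub>E UNIV. if (\<forall>p\<in>J. y p \<noteq> 0) \<and> v y = \<alpha> l * u y then N (- u y) else 0)"
  proof (rule sum.cong[OF refl])
    fix y :: "nat \<times> nat \<Rightarrow> 'a"
    show "card {z. z \<in> K \<rightarrow>\<^sub>E UNIV \<and> P y z} = (if (\<forall>p\<in>J. y p \<noteq> 0) \<and> v y = \<alpha> l * u y then N (- u y) else 0)"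
    proof (cases "(\<forall>p\<in>J. y p \<noteq> 0) \<and> v y = \<alpha> l * u y")
      case True
      have Pz: "P y z = ((\<forall>p\<in>K. z p \<noteq> 0) \<and> (\<Sum>p\<in>K. 1 * z p) = - u y)" for z
      proof -
        have e1: "(u y + (\<Sum>p\<in>K. z p) = 0) = ((\<Sum>p\<in>K. z p) = - u y)"
          by (metis add.commute eq_neg_iff_add_eq_0)
        have e2: "v y + \<alpha> l * (\<Sum>p\<in>K. z p) = 0" if "(\<Sum>p\<in>K. z p) = - u y"
          using True that by simp
        show ?thesis unfolding P_def e1 using True e2 by auto
      qed
      have E: "{z. z \<in> K \<rightarrow>\<^sub>E UNIV \<and> P y z} = {z. z \<in> K \<rightarrow>\<^sub>E UNIV \<and> (\<forall>p\<in>K. z p \<noteq> 0) \<and> (\<Sum>p\<in>K. 1 * z p) = - u y}"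
        unfolding Pz ..
      show ?thesis using True cnt_N[OF fK cK, of "- u y"] unfolding E cnt_def N_def by simp
    next
      case False
      have E: "{z. z \<in> K \<rightarrow>\<^sub>E UNIV \<and> P y z} = {}"
      proof (rule ccontr)
        assume "{z. z \<in> K \<rightarrow>\<^sub>E UNIV \<and> P y z} \<noteq> {}"
        then obtain z where "P y z" by auto
        then have "(\<forall>p\<in>J. y p \<noteq> 0)" "(\<Sum>p\<in>K. z p) = - u y" "v y + \<alpha> l * (\<Sum>p\<in>K. z p) = 0"
          unfolding P_def by (auto simp: eq_neg_iff_add_eq_0 add.commute)
        then have "(\<forall>p\<in>J. y p \<noteq> 0) \<and> v y = \<alpha> l * u y" by (simp add: algebra_simps)
        with False show False by blast
      qed
      show ?thesis using False unfolding E by (simp only: if_False card.empty)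
    qed
  qed
  also have "\<dots> = (\<Sum>y\<in>Y1. N (- u y))"
    unfolding Y1_def using fJ by (simp add: sum.inter_filter finite_PiE)
  finally have "int (card (Tset r \<alpha> (Suc l) 0)) = (\<Sum>y\<in>Y1. int (N (- u y)))" by simp
  also have "\<dots> = (\<Sum>y\<in>Y1. int (phi TYPE('a) (r l)) + (if u y = 0 then (-1) ^ r l else 0))"
    using psi_phi[where 'a='a, of "r l"] by (intro sum.cong) (auto simp: N_def)
  also have "\<dots> = int (card Y1) * int (phi TYPE('a) (r l)) + (-1) ^ r l * int (card {y\<in>Y1. u y = 0})"
    using fY1 by (simp add: sum.distrib sum.inter_filter[symmetric])
  also have "card {y\<in>Y1. u y = 0} = card (Tset r \<alpha> l 0)"
    unfolding Y1_def Tset_def J_def[symmetric] u_def v_def by (intro arg_cong[where f=card]) auto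
  also have "card Y1 = cnt J (\<lambda>p. \<alpha> (fst p) - \<alpha> l) 0"
    unfolding Y1_def cnt_def
  proof (intro arg_cong[where f=card] Collect_cong)
    fix y :: "nat \<times> nat \<Rightarrow> 'a"
    have "(\<Sum>j\<in>J. (\<alpha> (fst j) - \<alpha> l) * y j) = v y - \<alpha> l * u y"
      unfolding u_def v_def by (simp add: left_diff_distrib sum_subtractf sum_distrib_left)
    then show "(y \<in> J \<rightarrow>\<^sub>E UNIV \<and> (\<forall>p\<in>J. y p \<noteq> 0) \<and> v y = \<alpha> l * u y) =
        (y \<in> J \<rightarrow>\<^sub>E UNIV \<and> (\<forall>j\<in>J. y j \<noteq> 0) \<and> (\<Sum>j\<in>J. (\<alpha> (fst j) - \<alpha> l) * y j) = 0)"
      by auto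
  qed
  also have "\<dots> = psi TYPE('a) (\<Sum>i<l. r i)"
  proof -
    have "\<forall>j\<in>J. \<alpha> (fst j) - \<alpha> l \<noteq> 0"
      using inj by (auto simp: J_def Iset_def inj_on_def)
    then have "cnt J (\<lambda>p. \<alpha> (fst p) - \<alpha> l) 0 = cnt {..<card J} (\<lambda>_. 1::'a) 0"
      by (rule cnt_card[OF fJ])
    then show ?thesis by (simp add: psi_cnt J_def Iset_card)
  qed
  finally show ?thesis by simp
qed

lemma Tset_scale:
  fixes \<alpha> :: "nat \<Rightarrow> 'a::{finite,field}"
  assumes c: "c \<noteq> 0"
  shows "card (Tset r \<alpha> l \<gamma>) = card (Tset r \<alpha> l (c * \<gamma>))"
proof -
  define I where "I = Iset r l"
  define f where "f x = restrict (\<lambda>p. c * x p) I" for x :: "nat \<times> nat \<Rightarrow> 'a"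
  define g where "g x = restrict (\<lambda>p. x p / c) I" for x :: "nat \<times> nat \<Rightarrow> 'a"
  have s1: "(\<Sum>p\<in>I. f x p) = c * (\<Sum>p\<in>I. x p)" for x
    unfolding f_def by (simp add: sum_distrib_left)
  have s2: "(\<Sum>p\<in>I. \<alpha> (fst p) * f x p) = c * (\<Sum>p\<in>I. \<alpha> (fst p) * x p)" for x
    unfolding f_def by (simp add: sum_distrib_left algebra_simps)
  have s3: "(\<Sum>p\<in>I. g x p) = (\<Sum>p\<in>I. x p) / c" for x
    unfolding g_def by (simp add: sum_divide_distrib)
  have s4: "(\<Sum>p\<in>I. \<alpha> (fst p) * g x p) = (\<Sum>p\<in>I. \<alpha> (fst p) * x p) / c" for x
    unfolding g_def by (simp add: sum_divide_distrib)
  have mem: "x \<in> Tset r \<alpha> l \<delta> \<longleftrightarrow> x \<in> I \<rightarrow>\<^sub>E UNIV \<and> (\<forall>p\<in>I. x p \<noteq> 0) \<and>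
      (\<Sum>p\<in>I. x p) = \<delta> \<and> (\<Sum>p\<in>I. \<alpha> (fst p) * x p) = 0" for x \<delta>
    unfolding Tset_def I_def by simp
  have gf: "g (f a) = a" if "a \<in> I \<rightarrow>\<^sub>E UNIV" for a
  proof (rule ext)
    fix p show "g (f a) p = a p"
      using c PiE_arb[OF that, of p] by (cases "p \<in> I") (simp_all add: f_def g_def)
  qed
  have fg: "f (g a) = a" if "a \<in> I \<rightarrow>\<^sub>E UNIV" for a
  proof (rule ext)
    fix p show "f (g a) p = a p"
      using c PiE_arb[OF that, of p] by (cases "p \<in> I") (simp_all add: f_def g_def)
  qed
  have fPi: "f x \<in> I \<rightarrow>\<^sub>E UNIV" for x unfolding f_def by simp
  have gPi: "g x \<in> I \<rightarrow>\<^sub>E UNIV" for x unfolding g_def by simp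
  have fnz: "\<forall>p\<in>I. f x p \<noteq> 0" if "\<forall>p\<in>I. x p \<noteq> 0" for x using that c by (simp add: f_def)
  have gnz: "\<forall>p\<in>I. g x p \<noteq> 0" if "\<forall>p\<in>I. x p \<noteq> 0" for x using that c by (simp add: g_def)
  have "bij_betw f (Tset r \<alpha> l \<gamma>) (Tset r \<alpha> l (c * \<gamma>))"
  proof (rule bij_betw_byWitness[where f'=g])
    show "\<forall>a\<in>Tset r \<alpha> l \<gamma>. g (f a) = a"
    proof
      fix a assume "a \<in> Tset r \<alpha> l \<gamma>"
      then have "a \<in> I \<rightarrow>\<^sub>E UNIV" unfolding mem by (rule conjunct1)
      then show "g (f a) = a" by (rule gf)
    qed
    show "\<forall>a\<in>Tset r \<alpha> l (c * \<gamma>). f (g a) = a"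
    proof
      fix a assume "a \<in> Tset r \<alpha> l (c * \<gamma>)"
      then have "a \<in> I \<rightarrow>\<^sub>E UNIV" unfolding mem by (rule conjunct1)
      then show "f (g a) = a" by (rule fg)
    qed
    show "f ` Tset r \<alpha> l \<gamma> \<subseteq> Tset r \<alpha> l (c * \<gamma>)"
    proof
      fix y assume "y \<in> f ` Tset r \<alpha> l \<gamma>"
      then obtain x where x: "x \<in> Tset r \<alpha> l \<gamma>" "y = f x" by blast
      from x(1) have "x \<in> I \<rightarrow>\<^sub>E UNIV \<and> (\<forall>p\<in>I. x p \<noteq> 0) \<and> (\<Sum>p\<in>I. x p) = \<gamma> \<and> (\<Sum>p\<in>I. \<alpha> (fst p) * x p) = 0"
        unfolding mem .
      then show "y \<in> Tset r \<alpha> l (c * \<gamma>)" unfolding mem x(2) using fPi fnz s1 s2 by simp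
    qed
    show "g ` Tset r \<alpha> l (c * \<gamma>) \<subseteq> Tset r \<alpha> l \<gamma>"
    proof
      fix y assume "y \<in> g ` Tset r \<alpha> l (c * \<gamma>)"
      then obtain x where x: "x \<in> Tset r \<alpha> l (c * \<gamma>)" "y = g x" by blast
      from x(1) have "x \<in> I \<rightarrow>\<^sub>E UNIV \<and> (\<forall>p\<in>I. x p \<noteq> 0) \<and> (\<Sum>p\<in>I. x p) = c * \<gamma> \<and> (\<Sum>p\<in>I. \<alpha> (fst p) * x p) = 0"
        unfolding mem .
      then show "y \<in> Tset r \<alpha> l \<gamma>" unfolding mem x(2) using gPi gnz s3 s4 c by simp
    qed
  qed
  then show ?thesis by (rule bij_betw_same_card)
qed

lemma Tset_total:
  fixes \<alpha> :: "nat \<Rightarrow> 'a::{finite,field}"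
  assumes nz: "\<forall>i<l. \<alpha> i \<noteq> 0"
  shows "int (psi TYPE('a) (\<Sum>i<l. r i)) = int (card (Tset r \<alpha> l 0))
     + (int (card (UNIV::'a set)) - 1) * int (card (Tset r \<alpha> l 1))"
proof -
  define I where "I = Iset r l"
  have fI: "finite I" by (simp add: I_def)
  have "psi TYPE('a) (\<Sum>i<l. r i) = cnt I (\<lambda>p. \<alpha> (fst p)) 0"
    using cnt_card[OF fI, of "\<lambda>p. \<alpha> (fst p)" 0] nz by (auto simp: I_def Iset_def psi_cnt Iset_card)
  also have "cnt I (\<lambda>p. \<alpha> (fst p)) 0 = card (\<Union>\<gamma>\<in>UNIV. Tset r \<alpha> l \<gamma>)"
    unfolding cnt_def
  proof (intro arg_cong[where f=card] set_eqI iffI)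
    fix x assume "x \<in> {x \<in> I \<rightarrow>\<^sub>E UNIV. (\<forall>j\<in>I. x j \<noteq> 0) \<and> (\<Sum>j\<in>I. \<alpha> (fst j) * x j) = 0}"
    then have "x \<in> Tset r \<alpha> l (\<Sum>p\<in>I. x p)" unfolding Tset_def I_def by simp
    then show "x \<in> (\<Union>\<gamma>\<in>UNIV. Tset r \<alpha> l \<gamma>)" by blast
  next
    fix x assume "x \<in> (\<Union>\<gamma>\<in>UNIV. Tset r \<alpha> l \<gamma>)"
    then obtain \<gamma> where "x \<in> Tset r \<alpha> l \<gamma>" by blast
    then show "x \<in> {x \<in> I \<rightarrow>\<^sub>E UNIV. (\<forall>j\<in>I. x j \<noteq> 0) \<and> (\<Sum>j\<in>I. \<alpha> (fst j) * x j) = 0}"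
      unfolding Tset_def I_def by simp
  qed
  also have "\<dots> = (\<Sum>\<gamma>\<in>UNIV. card (Tset r \<alpha> l \<gamma>))"
  proof (rule card_UN_disjoint)
    show "\<forall>i\<in>UNIV. finite (Tset r \<alpha> l i)"
    proof
      fix i show "finite (Tset r \<alpha> l i)"
        by (rule finite_subset[OF _ finite_PiE[of "Iset r l" "\<lambda>_. UNIV"]]) (auto simp: Tset_def)
    qed
    show "\<forall>i\<in>UNIV. \<forall>j\<in>UNIV. i \<noteq> j \<longrightarrow> Tset r \<alpha> l i \<inter> Tset r \<alpha> l j = {}"
      unfolding Tset_def by blast
  qed simp
  also have "\<dots> = card (Tset r \<alpha> l 0) + (\<Sum>\<gamma>\<in>UNIV - {0}. card (Tset r \<alpha> l \<gamma>))"
    by (simp add: sum.remove[of UNIV 0])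
  also have "(\<Sum>\<gamma>\<in>UNIV - {0}. card (Tset r \<alpha> l \<gamma>)) = (\<Sum>\<gamma>\<in>UNIV - {0::'a}. card (Tset r \<alpha> l 1))"
  proof (rule sum.cong[OF refl])
    fix \<gamma> :: 'a assume "\<gamma> \<in> UNIV - {0}"
    then show "card (Tset r \<alpha> l \<gamma>) = card (Tset r \<alpha> l 1)" using Tset_scale[of \<gamma> r \<alpha> l 1] by simp
  qed
  also have "(\<Sum>\<gamma>\<in>UNIV - {0::'a}. card (Tset r \<alpha> l 1)) = (card (UNIV::'a set) - 1) * card (Tset r \<alpha> l 1)"
    by (simp add: card_Diff_singleton)
  finally have "psi TYPE('a) (\<Sum>i<l. r i) = card (Tset r \<alpha> l 0) + (card (UNIV::'a set) - 1) * card (Tset r \<alpha> l 1)" .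
  moreover have "card (UNIV::'a set) \<ge> 1" using card_gt_0_iff[of "UNIV::'a set"] by simp
  ultimately show ?thesis by (simp add: of_nat_diff)
qed

lemma Tset_one:
  fixes \<alpha> :: "nat \<Rightarrow> 'a::{finite,field}"
  assumes "\<alpha> 0 \<noteq> 0"
  shows "card (Tset r \<alpha> 1 \<gamma>) = (if \<gamma> = 0 then psi TYPE('a) (r 0) else 0)"
proof -
  define I where "I = Iset r 1"
  have fI: "finite I" by (simp add: I_def)
  have a: "(\<Sum>p\<in>I. \<alpha> (fst p) * x p) = \<alpha> 0 * (\<Sum>p\<in>I. x p)" for x :: "nat \<times> nat \<Rightarrow> 'a"
  proof -
    have "(\<Sum>p\<in>I. \<alpha> (fst p) * x p) = (\<Sum>p\<in>I. \<alpha> 0 * x p)"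
      by (rule sum.cong) (auto simp: I_def Iset_def)
    then show ?thesis by (simp add: sum_distrib_left)
  qed
  show ?thesis
  proof (cases "\<gamma> = 0")
    case True
    have "card (Tset r \<alpha> 1 \<gamma>) = cnt I (\<lambda>_. 1::'a) 0"
      unfolding cnt_def Tset_def I_def[symmetric] a
      by (rule arg_cong[where f=card], rule Collect_cong) (use True assms in auto)
    also have "\<dots> = psi TYPE('a) (r 0)"
      using cnt_card[OF fI, of "\<lambda>_. 1::'a" 0] by (simp add: psi_cnt I_def Iset_card)
    finally show ?thesis using True by simp
  next
    case False
    have "Tset r \<alpha> 1 \<gamma> = {}"
      unfolding Tset_def I_def[symmetric] a using False assms by auto
    then show ?thesis using False by simp
  qed
qed

lemma Tset_A:
  fixes \<alpha> :: "nat \<Rightarrow> 'a::{finite,field}"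
  assumes "l \<ge> 1" "inj_on \<alpha> {..<l}" "\<alpha> 0 \<noteq> 0"
  shows "int (card (Tset r \<alpha> l 0)) = A TYPE('a) r l"
  using assms
proof (induction l)
  case 0
  then show ?case by simp
next
  case (Suc l)
  show ?case
  proof (cases l)
    case 0
    then show ?thesis using Tset_one[of \<alpha> r 0] Suc.prems by simp
  next
    case (Suc l')
    have inj: "inj_on \<alpha> {..<l}" using Suc.prems(2) by (rule inj_on_subset) auto
    have "int (card (Tset r \<alpha> l 0)) = A TYPE('a) r l" using Suc.IH inj Suc.prems Suc by simp
    then show ?thesis using Tset_rec[OF Suc.prems(2), of r] Suc by simp
  qed
qed

theorem proposition2p2:
  fixes l :: nat and r :: "nat \<Rightarrow> nat" and \<alpha> :: "nat \<Rightarrow> 'a::{finite,field}" and \<gamma> :: 'a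
  assumes "l \<ge> 1"
    and "\<forall>i<l. r i \<ge> 1"
    and "\<forall>i<l. \<alpha> i \<noteq> 0"
    and "inj_on \<alpha> {..<l}"
  defines "I \<equiv> {(i, j). i < l \<and> j < r i}"
  defines "S \<equiv> {x :: nat \<times> nat \<Rightarrow> 'a. x \<in> I \<rightarrow>\<^sub>E UNIV \<and>
                  (\<Sum>i<l. \<Sum>j<r i. x (i, j)) = \<gamma> \<and>
                  (\<Sum>i<l. \<alpha> i * (\<Sum>j<r i. x (i, j))) = 0 \<and>
                  (\<Prod>p\<in>I. x p) \<noteq> 0}"
  shows "(l = 1 \<longrightarrow> real (card S) = (if \<gamma> = 0 then real (psi TYPE('a) (r 0)) else 0))
       \<and> (l > 1 \<longrightarrow> real (card S) =
            (if \<gamma> = 0 then real_of_int (A TYPE('a) r l)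
             else (real (psi TYPE('a) (\<Sum>i<l. r i)) - real_of_int (A TYPE('a) r l))
                  / (real (card (UNIV :: 'a set)) - 1)))"
proof -
  have II: "I = Iset r l" unfolding I_def Iset_def by auto
  have a0: "\<alpha> 0 \<noteq> 0" using assms(1,3) by auto
  have "S = Tset r \<alpha> l \<gamma>"
    unfolding S_def Tset_def II
  proof (intro Collect_cong)
    fix x :: "nat \<times> nat \<Rightarrow> 'a"
    have e1: "(\<Sum>i<l. \<Sum>j<r i. x (i, j)) = (\<Sum>p\<in>Iset r l. x p)"
      unfolding Iset_def by (simp add: sum.Sigma)
    have e2: "(\<Sum>i<l. \<alpha> i * (\<Sum>j<r i. x (i, j))) = (\<Sum>p\<in>Iset r l. \<alpha> (fst p) * x p)"
      unfolding Iset_def by (simp add: sum.Sigma sum_distrib_left case_prod_beta')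
    have e3: "((\<Prod>p\<in>Iset r l. x p) \<noteq> 0) = (\<forall>p\<in>Iset r l. x p \<noteq> 0)"
      by simp
    show "(x \<in> Iset r l \<rightarrow>\<^sub>E UNIV \<and> (\<Sum>i<l. \<Sum>j<r i. x (i, j)) = \<gamma> \<and>
          (\<Sum>i<l. \<alpha> i * (\<Sum>j<r i. x (i, j))) = 0 \<and> (\<Prod>p\<in>Iset r l. x p) \<noteq> 0) =
         (x \<in> Iset r l \<rightarrow>\<^sub>E UNIV \<and> (\<forall>p\<in>Iset r l. x p \<noteq> 0) \<and>
          (\<Sum>p\<in>Iset r l. x p) = \<gamma> \<and> (\<Sum>p\<in>Iset r l. \<alpha> (fst p) * x p) = 0)"
      unfolding e1 e2 e3 by blast
  qed
  then have S: "card S = card (Tset r \<alpha> l \<gamma>)" by simp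
  have q: "real (card (UNIV :: 'a set)) - 1 \<noteq> 0"
  proof -
    have "card (UNIV :: 'a set) \<ge> 2"
    proof -
      have "{0, 1::'a} \<subseteq> UNIV" by simp
      then have "card {0, 1::'a} \<le> card (UNIV :: 'a set)" by (rule card_mono[OF finite_UNIV])
      then show ?thesis by simp
    qed
    then show ?thesis by simp
  qed
  have A: "int (card (Tset r \<alpha> l 0)) = A TYPE('a) r l" using Tset_A assms(1,4) a0 by blast
  have tot: "int (psi TYPE('a) (\<Sum>i<l. r i)) = int (card (Tset r \<alpha> l 0))
     + (int (card (UNIV::'a set)) - 1) * int (card (Tset r \<alpha> l 1))"
    using Tset_total assms(3) by blast
  have g: "card (Tset r \<alpha> l \<gamma>) = card (Tset r \<alpha> l 1)" if "\<gamma> \<noteq> 0"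
    using Tset_scale[OF that, of r \<alpha> l 1] by simp
  have tot': "real (psi TYPE('a) (\<Sum>i<l. r i)) = real_of_int (A TYPE('a) r l)
     + (real (card (UNIV::'a set)) - 1) * real (card (Tset r \<alpha> l 1))"
    using arg_cong[OF tot, of real_of_int] A[symmetric] by simp
  show ?thesis
  proof (intro conjI impI)
    assume "l = 1"
    then show "real (card S) = (if \<gamma> = 0 then real (psi TYPE('a) (r 0)) else 0)"
      using S Tset_one[of \<alpha> r \<gamma>, OF a0] by simp
  next
    assume "l > 1"
    show "real (card S) = (if \<gamma> = 0 then real_of_int (A TYPE('a) r l)
             else (real (psi TYPE('a) (\<Sum>i<l. r i)) - real_of_int (A TYPE('a) r l))
                  / (real (card (UNIV :: 'a set)) - 1))"
      using S A g tot' q by (auto simp: field_simps)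
  qed
qed

end
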